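(* In a two-player perfect-information game of depth $D$, let $U_s$ be the exact EPFs and $\{\tilde U_s\}$ learned EPFs with targets $\tilde U'_s$, as in the context. If $L_\infty(\tilde U_s,\tilde U'_s)\le\epsilon$ for all $s\in\mathcal S$, then for every $s\in\mathcal S$, $$\max_{\mu_2\in[\underline V(s),\overline V(s)]}|\tilde U_s(\mu_2)-U_s(\mu_2)|\le\epsilon D.$$
   Context: A two-player perfect-information game is a finite rooted tree with states $\mathcal S$. Its leaves $\mathcal L$ carry payoffs $r_1(\ell),r_2(\ell)$ for the leader $\mathsf P_1$ and the follower $\mathsf P_2$. Non-leaf states are partitioned into leader states $\mathcal S_1$ and follower states $\mathcal S_2$, and $\mathcal C(s)$ denotes the children of $s$. The depth $D$ is the maximum number of edges on a root-to-leaf path. Bounds, defined by backward induction: - $\underline V(\ell)=\overline V(\ell)=r_2(\ell)$ for leaves; - $\underline V(s)=\min_{s'}\underline V(s')$ for $s\in\mathcal S_1$; - $\underline V(s)=\max_{s'}\underline V(s')$ for $s\in\mathcal S_2$; - $\overline V(s)=\max_{s'}\overline V(s')$ for every non-leaf $s$. For $s\in\mathcal S_2$ and $s'\in\mathcal C(s)$, let $\tau(s')=\max_{s^!\in\mathcal C(s),s^!\ne s'}\underline V(s^!)$. Let $\beta(s')=\tau(s')$ if the parent of $s'$ is in $\mathcal S_2$, and $-\infty$ if it is in $\mathcal S_1$. Operators, for $g:\mathbb R\to\mathbb R\cup\{-\infty\}$: - $\bigwedge_i g_i$ is the pointwise infimum of all concave $h\ge\max_i g_i$; - $[g\triangleright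 t](\mu)=g(\mu)$ for $\mu\ge t$ and $-\infty$ otherwise. Exact EPFs: $U_\ell(\mu)=r_1(\ell)$ if $\mu=r_2(\ell)$ and $-\infty$ otherwise; $U_s=\bigwedge_{s'\in\mathcal C(s)}(U_{s'}\triangleright\beta(s'))$. Learned EPFs: $\tilde U_\ell=U_\ell$ for leaves. For non-leaf $s$, $\tilde U_s$ is the piecewise linear interpolation of finitely many points with $x$-coordinates in $[\underline V(s),\overline V(s)]$ including both endpoints. It is real-valued there and $-\infty$ outside. Targets: $\tilde U'_s=\bigwedge_{s'\in\mathcal C(s)}(\tilde U_{s'}\triangleright\beta(s'))$ for non-leaf $s$, and $\tilde U'_\ell=\tilde U_\ell$. The loss is $L_\infty(f,g)=\sup_\mu|f(\mu)-g(\mu)|$, with $|(-\infty)-(-\infty)|=0$. *)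

theory Defs
  imports Complex_Main "HOL-Library.Extended_Real"
begin

(* A leaf carries (r_1, r_2); an inner node carries its owner and
   its (nonempty) list of children.  States are identified with positions
   (paths of child indices from the root), so identical subtrees at different
   positions are different states. *)
datatype player = Leader | Follower

datatype game = Leaf real real | Node player "game list"

fun is_leaf :: "game \<Rightarrow> bool" where
  "is_leaf (Leaf _ _) = True"
| "is_leaf (Node _ _) = False"

fun wf_game :: "game \<Rightarrow> bool" where
  "wf_game (Leaf _ _) = True"
| "wf_game (Node pl ts) = (ts \<noteq> [] \<and> (\<forall>t\<in>set ts. wf_game t))"

fun depth :: "game \<Rightarrow> nat" where
  "depth (Leaf _ _) = 0"
| "depth (Node pl ts) = Suc (Max (insert 0 (set (map depth ts))))"

fun valid_pos :: "game \<Rightarrow> nat list \<Rightarrow> bool" where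
  "valid_pos t [] = True"
| "valid_pos (Leaf _ _) (i # p) = False"
| "valid_pos (Node pl ts) (i # p) = (i < length ts \<and> valid_pos (ts ! i) p)"

fun sub :: "game \<Rightarrow> nat list \<Rightarrow> game" where
  "sub t [] = t"
| "sub (Leaf a b) (i # p) = Leaf a b"
| "sub (Node pl ts) (i # p) = sub (ts ! i) p"

fun Vlow :: "game \<Rightarrow> real" where
  "Vlow (Leaf r1 r2) = r2"
| "Vlow (Node Leader ts) = Min (set (map Vlow ts))"
| "Vlow (Node Follower ts) = Max (set (map Vlow ts))"

fun Vup :: "game \<Rightarrow> real" where
  "Vup (Leaf r1 r2) = r2"
| "Vup (Node pl ts) = Max (set (map Vup ts))"

(* tau of the i-th child among siblings ts (max over the other siblings; -\<infinity> if none) *)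
definition tau :: "game list \<Rightarrow> nat \<Rightarrow> ereal" where
  "tau ts i = (SUP j\<in>{j. j < length ts \<and> j \<noteq> i}. ereal (Vlow (ts ! j)))"

definition beta :: "player \<Rightarrow> game list \<Rightarrow> nat \<Rightarrow> ereal" where
  "beta pl ts i = (if pl = Follower then tau ts i else -\<infinity>)"

definition restr :: "(real \<Rightarrow> ereal) \<Rightarrow> ereal \<Rightarrow> real \<Rightarrow> ereal" where
  "restr g t = (\<lambda>\<mu>. if t \<le> ereal \<mu> then g \<mu> else -\<infinity>)"

definition concave_ext :: "(real \<Rightarrow> ereal) \<Rightarrow> bool" where
  "concave_ext h \<longleftrightarrow> (\<forall>x y t. 0 < t \<and> t < 1 \<longrightarrow>
      ereal (1 - t) * h x + ereal t * h y \<le> h ((1 - t) * x + t * y))"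

definition chull :: "(real \<Rightarrow> ereal) set \<Rightarrow> real \<Rightarrow> ereal" where
  "chull G = (\<lambda>\<mu>. Inf {h \<mu> | h. (\<forall>x. h x \<noteq> \<infinity>) \<and> concave_ext h \<and>
                                   (\<forall>x. \<forall>g\<in>G. g x \<le> h x)})"

function U :: "game \<Rightarrow> real \<Rightarrow> ereal" where
  "U (Leaf r1 r2) = (\<lambda>\<mu>. if \<mu> = r2 then ereal r1 else -\<infinity>)"
| "U (Node pl ts) = chull ((\<lambda>i. restr (U (ts ! i)) (beta pl ts i)) ` {..<length ts})"
  by pat_completeness auto
termination
  apply (relation "measure size")
   apply auto
  by (metis add.commute less_Suc_eq_le nth_mem size_list_estimation' order_refl)

definition target :: "game \<Rightarrow> (nat list \<Rightarrow> real \<Rightarrow> ereal) \<Rightarrow> nat list \<Rightarrow> real \<Rightarrow> ereal" where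
  "target G Ut p = (case sub G p of
       Leaf _ _ \<Rightarrow> Ut p
     | Node pl ts \<Rightarrow> chull ((\<lambda>i. restr (Ut (p @ [i])) (beta pl ts i)) ` {..<length ts}))"

definition pwl_interp :: "(real \<Rightarrow> ereal) \<Rightarrow> real \<Rightarrow> real \<Rightarrow> bool" where
  "pwl_interp f a b \<longleftrightarrow> (\<exists>P y. finite P \<and> P \<subseteq> {a..b} \<and> a \<in> P \<and> b \<in> P \<and>
      (\<forall>\<mu>. \<mu> \<notin> {a..b} \<longrightarrow> f \<mu> = -\<infinity>) \<and>
      (\<forall>p\<in>P. f p = ereal (y p)) \<and>
      (\<forall>p\<in>P. \<forall>q\<in>P. p < q \<and> {p<..<q} \<inter> P = {} \<longrightarrow>
         (\<forall>\<mu>\<in>{p..q}. f \<mu> = ereal (y p + (\<mu> - p) / (q - p) * (y q - y p)))))"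

definition pt_err :: "ereal \<Rightarrow> ereal \<Rightarrow> ereal" where
  "pt_err x y = (if x = -\<infinity> \<and> y = -\<infinity> then 0 else \<bar>x - y\<bar>)"

definition Linf :: "(real \<Rightarrow> ereal) \<Rightarrow> (real \<Rightarrow> ereal) \<Rightarrow> ereal" where
  "Linf f g = (SUP \<mu>. pt_err (f \<mu>) (g \<mu>))"

end

theory Submission
  imports Defs
begin

lemma pt_err_inf1: "pt_err \<infinity> y = \<infinity>"
  by (cases y) (auto simp: pt_err_def)
lemma pt_err_inf2: "pt_err x \<infinity> = \<infinity>"
  by (cases x) (auto simp: pt_err_def)
lemma pt_err_nonneg: "0 \<le> pt_err x y"
  by (auto simp: pt_err_def)

lemma pt_err_le_iff:
  assumes "pt_err a b \<le> ereal d"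
  shows "a \<le> b + ereal d \<and> b \<le> a + ereal d"
proof -
  have "a \<noteq> \<infinity>" "b \<noteq> \<infinity>" using assms pt_err_inf1 pt_err_inf2 by force+
  then show ?thesis using assms
    by (cases a; cases b) (auto simp: pt_err_def split: if_splits)
qed

lemma Linf_pt: "Linf f g \<le> ereal e \<Longrightarrow> pt_err (f x) (g x) \<le> ereal e"
  unfolding Linf_def by (meson SUP_upper UNIV_I order_trans)

lemma concave_shift:
  assumes "concave_ext h"
  shows "concave_ext (\<lambda>x. h x + ereal d)"
  unfolding concave_ext_def
proof (intro allI impI)
  fix x y t :: real assume t: "0 < t \<and> t < 1"
  have c: "ereal (1 - t) * h x + ereal t * h y \<le> h ((1 - t) * x + t * y)"
    using assms t unfolding concave_ext_def by blast
  show "ereal (1 - t) * (h x + ereal d) + ereal t * (h y + ereal d)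
        \<le> h ((1 - t) * x + t * y) + ereal d"
  proof (cases "h x = \<infinity> \<or> h y = \<infinity>")
    case True
    then have "h ((1 - t) * x + t * y) = \<infinity>" using c t
      by (cases "h x"; cases "h y") auto
    then show ?thesis by simp
  next
    case F2: False
    show ?thesis
    proof (cases "h x = -\<infinity> \<or> h y = -\<infinity>")
      case True
      then show ?thesis using t F2 by (cases "h x"; cases "h y") auto
    next
      case False
      then obtain a b where ab: "h x = ereal a" "h y = ereal b" using F2
        by (cases "h x"; cases "h y") auto
      show ?thesis
      proof (cases "h ((1 - t) * x + t * y)")
        case (real z)
        then have "(1-t)*a + t*b \<le> z" using c ab by simp
        then have "(1-t)*(a+d) + t*(b+d) \<le> z + d" by (simp add: algebra_simps)
        then show ?thesis using ab real by simp
      qed (use c ab in auto)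
    qed
  qed
qed

lemma chull_shift:
  assumes "\<forall>i\<in>I. \<forall>x. f i x \<le> g i x + ereal d"
  shows "chull (f ` I) \<mu> \<le> chull (g ` I) \<mu> + ereal d"
proof -
  have "chull (f ` I) \<mu> - ereal d \<le> chull (g ` I) \<mu>"
    unfolding chull_def
  proof (rule Inf_greatest, safe)
    fix h assume h: "\<forall>x. h x \<noteq> \<infinity>" "concave_ext h" "\<forall>x. \<forall>g\<in>g ` I. g x \<le> h x"
    let ?h = "\<lambda>x. h x + ereal d"
    have "Inf {h \<mu> | h. (\<forall>x. h x \<noteq> \<infinity>) \<and> concave_ext h \<and> (\<forall>x. \<forall>g\<in>f ` I. g x \<le> h x)} \<le> ?h \<mu>"
    proof (rule Inf_lower, rule CollectI, rule exI[of _ ?h], intro conjI)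
      show "\<forall>x. ?h x \<noteq> \<infinity>" using h(1) by simp
      show "concave_ext ?h" using h(2) by (rule concave_shift)
      show "\<forall>x. \<forall>g\<in>f ` I. g x \<le> ?h x"
      proof (intro allI ballI)
        fix x g' assume "g' \<in> f ` I"
        then obtain i where i: "i \<in> I" "g' = f i" by auto
        have "f i x \<le> g i x + ereal d" using assms i by blast
        also have "\<dots> \<le> h x + ereal d" using h(3) i by (intro add_right_mono) blast
        finally show "g' x \<le> ?h x" using i by simp
      qed
    qed simp
    then show "Inf {h \<mu> | h. (\<forall>x. h x \<noteq> \<infinity>) \<and> concave_ext h \<and> (\<forall>x. \<forall>g\<in>f ` I. g x \<le> h x)} - ereal d \<le> h \<mu>"
      by (simp add: ereal_minus_le)
  qed
  then show ?thesis by (simp add: ereal_minus_le)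
qed

lemma restr_shift:
  assumes "\<forall>x. f x \<le> g x + ereal d" "0 \<le> d"
  shows "restr f t x \<le> restr g t x + ereal d"
  using assms unfolding restr_def by auto

lemma chull_lower:
  assumes g: "g \<in> F" and g': "g' \<in> F" and gx: "g x \<noteq> -\<infinity>" and gy: "g' y \<noteq> -\<infinity>"
    and xm: "x \<le> \<mu>" and my: "\<mu> \<le> y"
  shows "chull F \<mu> \<noteq> -\<infinity>"
proof -
  obtain c where c: "c \<noteq> -\<infinity>" and cl: "\<And>h. concave_ext h \<Longrightarrow> (\<forall>x. \<forall>g\<in>F. g x \<le> h x) \<Longrightarrow> c \<le> h \<mu>"
  proof (cases "\<mu> = x")
    case True
    show ?thesis by (rule that[of "g x"]) (use gx g True in auto)
  next
    case F1: False
    show ?thesis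
    proof (cases "\<mu> = y")
      case True
      show ?thesis by (rule that[of "g' y"]) (use gy g' True in auto)
    next
      case False
      define s where "s = (\<mu> - x) / (y - x)"
      have xy: "x < \<mu>" "\<mu> < y" using F1 False xm my by auto
      have s: "0 < s" "s < 1" using xy by (auto simp: s_def field_simps)
      have "y - x \<noteq> 0" using xy by simp
      then have "s * (y - x) = \<mu> - x" unfolding s_def by simp
      then have mu: "\<mu> = (1 - s) * x + s * y" by (simp add: algebra_simps)
      show ?thesis
      proof (rule that[of "ereal (1 - s) * g x + ereal s * g' y"])
        show "ereal (1 - s) * g x + ereal s * g' y \<noteq> -\<infinity>"
          using s gx gy by (cases "g x"; cases "g' y") auto
      next
        fix h assume h: "concave_ext h" "\<forall>x. \<forall>g\<in>F. g x \<le> h x"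
        have "ereal (1 - s) * g x + ereal s * g' y \<le> ereal (1 - s) * h x + ereal s * h y"
          using h(2) g g' s by (intro add_mono ereal_mult_left_mono) auto
        also have "\<dots> \<le> h \<mu>" using h(1) s mu unfolding concave_ext_def by auto
        finally show "ereal (1 - s) * g x + ereal s * g' y \<le> h \<mu>" .
      qed
    qed
  qed
  have "c \<le> chull F \<mu>" unfolding chull_def by (rule Inf_greatest) (use cl in auto)
  then show ?thesis using c by auto
qed

lemma pos_child:
  "valid_pos G p \<Longrightarrow> sub G p = Node pl ts \<Longrightarrow> i < length ts \<Longrightarrow>
   valid_pos G (p @ [i]) \<and> sub G (p @ [i]) = ts ! i"
proof (induction p arbitrary: G)
  case Nil
  then show ?case by auto
next
  case (Cons j p)
  then show ?case by (cases G) auto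
qed

lemma wf_sub: "valid_pos G p \<Longrightarrow> wf_game G \<Longrightarrow> wf_game (sub G p)"
proof (induction p arbitrary: G)
  case (Cons j p)
  then show ?case by (cases G) auto
qed simp

lemma depth_child: "i < length ts \<Longrightarrow> depth (ts ! i) \<le> Max (insert 0 (set (map depth ts)))"
  by (intro Max_ge) auto

lemma depth_sub: "valid_pos G p \<Longrightarrow> depth (sub G p) \<le> depth G"
proof (induction p arbitrary: G)
  case (Cons j p)
  then show ?case
  proof (cases G)
    case (Node pl ts)
    then have "j < length ts" "valid_pos (ts ! j) p" using Cons by auto
    then have "depth (sub (ts ! j) p) \<le> depth (ts ! j)" using Cons by blast
    also have "\<dots> \<le> depth G" using depth_child[OF \<open>j < length ts\<close>] Node by simp
    finally show ?thesis using Node by simp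
  qed simp
qed simp

lemma max_idx:
  fixes f :: "game \<Rightarrow> real"
  assumes "ts \<noteq> []"
  shows "\<exists>k<length ts. Max (set (map f ts)) = f (ts ! k) \<and> (\<forall>i<length ts. f (ts ! i) \<le> f (ts ! k))"
proof -
  have "Max (set (map f ts)) \<in> set (map f ts)" using assms by (intro Max_in) auto
  then obtain k where k: "k < length ts" "Max (set (map f ts)) = f (ts ! k)"
    by (auto simp: in_set_conv_nth)
  have "\<forall>i<length ts. f (ts ! i) \<le> Max (set (map f ts))" by (auto intro: Max_ge)
  note a = this
  show ?thesis apply (rule exI[of _ k]) using k a by auto
qed

lemma min_idx:
  fixes f :: "game \<Rightarrow> real"
  assumes "ts \<noteq> []"
  shows "\<exists>k<length ts. Min (set (map f ts)) = f (ts ! k) \<and> (\<forall>i<length ts. f (ts ! k) \<le> f (ts ! i))"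
proof -
  have "Min (set (map f ts)) \<in> set (map f ts)" using assms by (intro Min_in) auto
  then obtain k where k: "k < length ts" "Min (set (map f ts)) = f (ts ! k)"
    by (auto simp: in_set_conv_nth)
  have "\<forall>i<length ts. Min (set (map f ts)) \<le> f (ts ! i)" by (auto intro: Min_le)
  note a = this
  show ?thesis apply (rule exI[of _ k]) using k a by auto
qed

lemma Vlow_le_Vup: "wf_game t \<Longrightarrow> Vlow t \<le> Vup t"
proof (induction t)
  case (Node pl ts)
  then have ne: "ts \<noteq> []" and wf: "\<forall>t\<in>set ts. wf_game t" by auto
  obtain j where j: "j < length ts" "Vup (Node pl ts) = Vup (ts ! j)"
     "\<forall>i<length ts. Vup (ts ! i) \<le> Vup (ts ! j)"
    using max_idx[OF ne, of Vup] by auto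
  have ch: "\<forall>i<length ts. Vlow (ts ! i) \<le> Vup (ts ! i)" using Node.IH wf by auto
  show ?case
  proof (cases pl)
    case Leader
    obtain k where "k < length ts" "Vlow (Node pl ts) = Vlow (ts ! k)"
      using min_idx[OF ne, of Vlow] Leader by auto
    then show ?thesis using ch j by force
  next
    case Follower
    obtain k where "k < length ts" "Vlow (Node pl ts) = Vlow (ts ! k)"
      using max_idx[OF ne, of Vlow] Follower by auto
    then show ?thesis using ch j by force
  qed
qed simp

lemma U_finite: "wf_game t \<Longrightarrow> Vlow t \<le> \<mu> \<Longrightarrow> \<mu> \<le> Vup t \<Longrightarrow> U t \<mu> \<noteq> -\<infinity>"
proof (induction t arbitrary: \<mu>)
  case (Node pl ts)
  then have ne: "ts \<noteq> []" and wf: "\<forall>t\<in>set ts. wf_game t" by auto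
  obtain j where j: "j < length ts" "Vup (Node pl ts) = Vup (ts ! j)"
     "\<forall>i<length ts. Vup (ts ! i) \<le> Vup (ts ! j)"
    using max_idx[OF ne, of Vup] by auto
  have ch: "\<forall>i<length ts. Vlow (ts ! i) \<le> Vup (ts ! i)" using Vlow_le_Vup wf by auto
  obtain k where k: "k < length ts" "Vlow (Node pl ts) = Vlow (ts ! k)"
     "pl = Follower \<Longrightarrow> \<forall>i<length ts. Vlow (ts ! i) \<le> Vlow (ts ! k)"
  proof (cases pl)
    case Leader
    then show ?thesis using min_idx[OF ne, of Vlow] that by auto
  next
    case Follower
    then show ?thesis using max_idx[OF ne, of Vlow] that by auto
  qed
  define F where "F = (\<lambda>i. restr (U (ts ! i)) (beta pl ts i)) ` {..<length ts}"
  have bk: "beta pl ts k \<le> ereal (Vlow (ts ! k))"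
  proof (cases pl)
    case Follower
    then show ?thesis unfolding beta_def tau_def using k(1) k(3)
      by (auto intro!: SUP_least)
  qed (simp add: beta_def)
  have bj: "beta pl ts j \<le> ereal (Vup (ts ! j))"
  proof (cases pl)
    case Follower
    have "\<forall>i<length ts. Vlow (ts ! i) \<le> Vup (ts ! j)" using ch j(3) by force
    then show ?thesis unfolding beta_def tau_def using Follower
      by (auto intro!: SUP_least)
  qed (simp add: beta_def)
  have gk: "restr (U (ts ! k)) (beta pl ts k) (Vlow (ts ! k)) \<noteq> -\<infinity>"
    using bk Node.IH[of "ts ! k" "Vlow (ts ! k)"] k(1) wf ch unfolding restr_def by auto
  have gj: "restr (U (ts ! j)) (beta pl ts j) (Vup (ts ! j)) \<noteq> -\<infinity>"
    using bj Node.IH[of "ts ! j" "Vup (ts ! j)"] j(1) wf ch unfolding restr_def by auto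
  have "chull F \<mu> \<noteq> -\<infinity>"
    by (rule chull_lower[where g="restr (U (ts ! k)) (beta pl ts k)" and g'="restr (U (ts ! j)) (beta pl ts j)", OF _ _ gk gj]) (use Node.prems k j in \<open>auto simp: F_def\<close>)
  then show ?case by (simp add: F_def)
qed simp

theorem theorem5:
  fixes G :: game and Ut :: "nat list \<Rightarrow> real \<Rightarrow> ereal" and \<epsilon> :: real
  assumes "wf_game G"
    and "\<forall>p. valid_pos G p \<and> is_leaf (sub G p) \<longrightarrow> Ut p = U (sub G p)"
    and "\<forall>p. valid_pos G p \<and> \<not> is_leaf (sub G p) \<longrightarrow>
           pwl_interp (Ut p) (Vlow (sub G p)) (Vup (sub G p))"
    and "\<forall>p. valid_pos G p \<longrightarrow> Linf (Ut p) (target G Ut p) \<le> ereal \<epsilon>"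
  shows "\<forall>p. valid_pos G p \<longrightarrow>
           (SUP \<mu>\<in>{Vlow (sub G p)..Vup (sub G p)}. \<bar>Ut p \<mu> - U (sub G p) \<mu>\<bar>)
             \<le> ereal (\<epsilon> * real (depth G))"
proof -
  have "ereal 0 \<le> ereal \<epsilon>"
    using pt_err_nonneg Linf_pt assms(4) valid_pos.simps(1) by (metis zero_ereal_def order_trans)
  then have e0: "0 \<le> \<epsilon>" by simp
  have main: "\<forall>p. valid_pos G p \<longrightarrow> sub G p = t \<longrightarrow>
     (\<forall>\<mu>. Ut p \<mu> \<le> U t \<mu> + ereal (\<epsilon> * real (depth t)) \<and>
          U t \<mu> \<le> Ut p \<mu> + ereal (\<epsilon> * real (depth t)))" for t
  proof (induction t)
    case (Leaf r1 r2)
    show ?case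
    proof (intro allI impI)
      fix p \<mu> assume p: "valid_pos G p" "sub G p = Leaf r1 r2"
      then have "Ut p = U (Leaf r1 r2)" using assms(2) by force
      then show "Ut p \<mu> \<le> U (Leaf r1 r2) \<mu> + ereal (\<epsilon> * real (depth (Leaf r1 r2))) \<and>
          U (Leaf r1 r2) \<mu> \<le> Ut p \<mu> + ereal (\<epsilon> * real (depth (Leaf r1 r2)))" by simp
    qed
  next
    case (Node pl ts)
    define d where "d = Max (insert 0 (set (map depth ts)))"
    have dd: "depth (Node pl ts) = Suc d" by (simp add: d_def)
    show ?case
    proof (intro allI impI)
      fix p \<mu> assume p: "valid_pos G p" "sub G p = Node pl ts"
      have ch: "\<forall>x. Ut (p @ [i]) x \<le> U (ts ! i) x + ereal (\<epsilon> * d) \<and>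
                     U (ts ! i) x \<le> Ut (p @ [i]) x + ereal (\<epsilon> * d)" if i: "i < length ts" for i
      proof
        fix x
        have pc: "valid_pos G (p @ [i])" "sub G (p @ [i]) = ts ! i" using pos_child[OF p i] by auto
        have "ts ! i \<in> set ts" using i by simp
        then have ih: "Ut (p @ [i]) x \<le> U (ts ! i) x + ereal (\<epsilon> * depth (ts ! i)) \<and>
                     U (ts ! i) x \<le> Ut (p @ [i]) x + ereal (\<epsilon> * depth (ts ! i))"
          using Node.IH pc by blast
        have "ereal (\<epsilon> * depth (ts ! i)) \<le> ereal (\<epsilon> * d)"
          using depth_child[OF i] e0 by (simp add: d_def mult_left_mono)
        then show "Ut (p @ [i]) x \<le> U (ts ! i) x + ereal (\<epsilon> * d) \<and>
                     U (ts ! i) x \<le> Ut (p @ [i]) x + ereal (\<epsilon> * d)"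
          using ih by (meson add_left_mono order_trans)
      qed
      have ed: "0 \<le> \<epsilon> * d" using e0 by simp
      have tg: "target G Ut p = chull ((\<lambda>i. restr (Ut (p @ [i])) (beta pl ts i)) ` {..<length ts})"
        using p by (simp add: target_def)
      have c1: "target G Ut p \<mu> \<le> U (Node pl ts) \<mu> + ereal (\<epsilon> * d)"
        unfolding tg U.simps by (rule chull_shift) (use ch ed in \<open>auto intro!: restr_shift\<close>)
      have c2: "U (Node pl ts) \<mu> \<le> target G Ut p \<mu> + ereal (\<epsilon> * d)"
        unfolding tg U.simps by (rule chull_shift) (use ch ed in \<open>auto intro!: restr_shift\<close>)
      have a: "Ut p \<mu> \<le> target G Ut p \<mu> + ereal \<epsilon> \<and> target G Ut p \<mu> \<le> Ut p \<mu> + ereal \<epsilon>"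
        using pt_err_le_iff Linf_pt assms(4) p(1) by blast
      have eq: "ereal (\<epsilon> * real (depth (Node pl ts))) = ereal (\<epsilon> * d) + ereal \<epsilon>"
        unfolding dd by (simp add: algebra_simps)
      have eq': "ereal (\<epsilon> * real (depth (Node pl ts))) = ereal \<epsilon> + ereal (\<epsilon> * d)"
        unfolding dd by (simp add: algebra_simps)
      have "Ut p \<mu> \<le> U (Node pl ts) \<mu> + ereal (\<epsilon> * d) + ereal \<epsilon>"
        using a c1 by (meson add_right_mono order_trans)
      have "U (Node pl ts) \<mu> \<le> Ut p \<mu> + ereal \<epsilon> + ereal (\<epsilon> * d)"
        using a c2 by (meson add_right_mono order_trans)
      show "Ut p \<mu> \<le> U (Node pl ts) \<mu> + ereal (\<epsilon> * real (depth (Node pl ts))) \<and>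
          U (Node pl ts) \<mu> \<le> Ut p \<mu> + ereal (\<epsilon> * real (depth (Node pl ts)))"
        proof
        show "Ut p \<mu> \<le> U (Node pl ts) \<mu> + ereal (\<epsilon> * real (depth (Node pl ts)))"
          unfolding eq using \<open>Ut p \<mu> \<le> U (Node pl ts) \<mu> + ereal (\<epsilon> * d) + ereal \<epsilon>\<close> by (simp only: add.assoc)
        show "U (Node pl ts) \<mu> \<le> Ut p \<mu> + ereal (\<epsilon> * real (depth (Node pl ts)))"
          unfolding eq' using \<open>U (Node pl ts) \<mu> \<le> Ut p \<mu> + ereal \<epsilon> + ereal (\<epsilon> * d)\<close> by (simp only: add.assoc)
      qed
    qed
  qed
  show ?thesis
  proof (intro allI impI)
    fix p assume p: "valid_pos G p"
    show "(SUP \<mu>\<in>{Vlow (sub G p)..Vup (sub G p)}. \<bar>Ut p \<mu> - U (sub G p) \<mu>\<bar>)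
             \<le> ereal (\<epsilon> * real (depth G))"
    proof (rule SUP_least)
      fix \<mu> assume mu: "\<mu> \<in> {Vlow (sub G p)..Vup (sub G p)}"
      define D where "D = \<epsilon> * real (depth (sub G p))"
      have b: "Ut p \<mu> \<le> U (sub G p) \<mu> + ereal D" "U (sub G p) \<mu> \<le> Ut p \<mu> + ereal D"
        using main p unfolding D_def by blast+
      have ni: "Ut p \<mu> \<noteq> \<infinity>"
        proof
        assume "Ut p \<mu> = \<infinity>"
        then have "pt_err (Ut p \<mu>) (target G Ut p \<mu>) = \<infinity>" by (simp add: pt_err_inf1)
        with Linf_pt[OF assms(4)[rule_format, OF p], of \<mu>] show False by simp
      qed
      have nm: "U (sub G p) \<mu> \<noteq> -\<infinity>"
        using U_finite[OF wf_sub[OF p assms(1)]] mu by auto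
      obtain a where a: "Ut p \<mu> = ereal a" using ni b nm by (cases "Ut p \<mu>") auto
      obtain c where c: "U (sub G p) \<mu> = ereal c" using a b nm by (cases "U (sub G p) \<mu>") auto
      have "\<bar>a - c\<bar> \<le> D" using a c b by auto
      also have "D \<le> \<epsilon> * real (depth G)"
        unfolding D_def using depth_sub[OF p] e0 by (simp add: mult_left_mono)
      finally show "\<bar>Ut p \<mu> - U (sub G p) \<mu>\<bar> \<le> ereal (\<epsilon> * real (depth G))"
        using a c by simp
    qed
  qed
qed

end
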